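(* $\displaystyle T_2(z)=\sum_{c\ge0}T(2,c)z^c=\frac{1+2z^2-z^3}{1-2z-2z^3+z^4}.$
   Context: A tatami tiling of the $r\times c$ rectangular grid is a tiling by monomers ($1\times1$ tiles) and dimers ($1\times2$ or $2\times1$ tiles) such that no point is a corner of four distinct tiles. $T(r,c)$ denotes the total number of tatami tilings of the $r\times c$ grid (with any number of monomers), with the convention $T(r,0)=1$ (the empty tiling). *)

theory Defs
  imports "HOL-Computational_Algebra.Formal_Power_Series"
begin

definition grid :: "nat \<Rightarrow> nat \<Rightarrow> (nat \<times> nat) set" where
  "grid r c = {0..<r} \<times> {0..<c}"

definition is_tile :: "(nat \<times> nat) set \<Rightarrow> bool" where
  "is_tile t \<longleftrightarrow> (\<exists>a. t = {a}) \<or> (\<exists>i j. t = {(i,j),(i,Suc j)}) \<or> (\<exists>i j. t = {(i,j),(Suc i,j)})"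

definition tiling :: "nat \<Rightarrow> nat \<Rightarrow> (nat \<times> nat) set set \<Rightarrow> bool" where
  "tiling r c P \<longleftrightarrow> (\<forall>t\<in>P. is_tile t) \<and> (\<forall>t\<in>P. \<forall>u\<in>P. t \<noteq> u \<longrightarrow> t \<inter> u = {})
     \<and> \<Union>P = grid r c"

text \<open>Tatami condition: no interior lattice point (i,j) has its four surrounding cells
  (i-1,j-1),(i-1,j),(i,j-1),(i,j) lying in four distinct tiles (equivalently: no point is
  a corner of four distinct tiles; boundary points touch at most two cells).\<close>
definition tatami :: "nat \<Rightarrow> nat \<Rightarrow> (nat \<times> nat) set set \<Rightarrow> bool" where
  "tatami r c P \<longleftrightarrow> tiling r c P \<and>
     (\<forall>i j. 0 < i \<and> i < r \<and> 0 < j \<and> j < c \<longrightarrow>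
        \<not> (\<exists>t1\<in>P. \<exists>t2\<in>P. \<exists>t3\<in>P. \<exists>t4\<in>P. distinct [t1,t2,t3,t4] \<and>
              (i-1,j-1) \<in> t1 \<and> (i-1,j) \<in> t2 \<and> (i,j-1) \<in> t3 \<and> (i,j) \<in> t4))"

definition T :: "nat \<Rightarrow> nat \<Rightarrow> nat" where
  "T r c = card {P. tatami r c P}"

end

theory Submission
  imports Defs
begin


definition reg :: "nat \<Rightarrow> nat \<Rightarrow> (nat \<times> nat) set" where
  "reg a b = {(i,j). (i=0 \<and> j<a) \<or> (i=1 \<and> j<b)}"

definition same :: "(nat \<times> nat) set set \<Rightarrow> nat \<times> nat \<Rightarrow> nat \<times> nat \<Rightarrow> bool" where
  "same P x y \<longleftrightarrow> (\<exists>t\<in>P. x\<in>t \<and> y\<in>t)"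

definition tlg :: "(nat \<times> nat) set \<Rightarrow> (nat \<times> nat) set set \<Rightarrow> bool" where
  "tlg A P \<longleftrightarrow> (\<forall>t\<in>P. is_tile t) \<and> (\<forall>t\<in>P. \<forall>u\<in>P. t \<noteq> u \<longrightarrow> t \<inter> u = {}) \<and> \<Union>P = A"

definition C :: "(nat \<times> nat) set set \<Rightarrow> nat \<Rightarrow> bool" where
  "C P j \<longleftrightarrow> same P (0,j-1) (0,j) \<or> same P (1,j-1) (1,j) \<or> same P (0,j-1) (1,j-1) \<or> same P (0,j) (1,j)"

definition cond :: "nat \<Rightarrow> nat \<Rightarrow> (nat \<times> nat) set set \<Rightarrow> bool" where
  "cond a b P \<longleftrightarrow> (\<forall>j. 0<j \<and> j < max a b \<longrightarrow> C P j)"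

definition gt :: "nat \<Rightarrow> nat \<Rightarrow> (nat \<times> nat) set set \<Rightarrow> bool" where
  "gt a b P \<longleftrightarrow> tlg (reg a b) P \<and> cond a b P"

lemma reg_mem[simp]: "(i,j) \<in> reg a b \<longleftrightarrow> (i=0 \<and> j<a) \<or> (i=1 \<and> j<b)"
  by (simp add: reg_def)

lemma same_insert[simp]: "same (insert t P) x y \<longleftrightarrow> (x\<in>t \<and> y\<in>t) \<or> same P x y"
  by (auto simp: same_def)
lemma same_empty[simp]: "\<not> same {} x y" by (simp add: same_def)
lemma same_Un: "same (P \<union> K) x y \<longleftrightarrow> same P x y \<or> same K x y"
  by (auto simp: same_def)

lemma same_out1: "tlg B P \<Longrightarrow> x \<notin> B \<Longrightarrow> \<not> same P x y"
  by (auto simp: same_def tlg_def)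
lemma same_out2: "tlg B P \<Longrightarrow> y \<notin> B \<Longrightarrow> \<not> same P x y"
  by (auto simp: same_def tlg_def)

lemma tile_nonempty: "is_tile t \<Longrightarrow> t \<noteq> {}"
  by (auto simp: is_tile_def)

lemma cell_tile: "is_tile t \<Longrightarrow> (i,j) \<in> t \<Longrightarrow>
  t = {(i,j)} \<or> t = {(i,j),(i,Suc j)} \<or> (j>0 \<and> t = {(i,j-1),(i,j)}) \<or> t = {(i,j),(Suc i,j)} \<or> (i>0 \<and> t = {(i-1,j),(i,j)})"
  unfolding is_tile_def
proof (elim disjE exE)
  fix a assume "t = {a}" "(i,j) \<in> t" then show ?thesis by simp
next
  fix a b assume t: "t = {(a,b),(a,Suc b)}" "(i,j) \<in> t"
  then have "(i,j) = (a,b) \<or> (i,j) = (a,Suc b)" by blast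
  then show ?thesis
  proof
    assume "(i,j) = (a,b)" then show ?thesis using t by simp
  next
    assume "(i,j) = (a,Suc b)" then have "i = a" "j = Suc b" by auto
    then show ?thesis using t by simp
  qed
next
  fix a b assume t: "t = {(a,b),(Suc a,b)}" "(i,j) \<in> t"
  then have "(i,j) = (a,b) \<or> (i,j) = (Suc a,b)" by blast
  then show ?thesis
  proof
    assume "(i,j) = (a,b)" then show ?thesis using t by simp
  next
    assume "(i,j) = (Suc a,b)" then have "i = Suc a" "j = b" by auto
    then show ?thesis using t by simp
  qed
qed

lemma is_tile_M: "is_tile {x}" by (auto simp: is_tile_def)
lemma is_tile_H: "is_tile {(i,j),(i,Suc j)}" by (auto simp: is_tile_def)
lemma is_tile_V: "is_tile {(0,j),(1,j)}" unfolding is_tile_def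
  by (rule disjI2, rule disjI2, rule exI[of _ 0], rule exI[of _ j], simp)

lemma uniq: "tlg A P \<Longrightarrow> t\<in>P \<Longrightarrow> u\<in>P \<Longrightarrow> x\<in>t \<Longrightarrow> x\<in>u \<Longrightarrow> t = u"
  by (auto simp: tlg_def)

lemma tl_finite: "finite A \<Longrightarrow> finite {P. tlg A P}"
  by (rule finite_subset[of _ "Pow (Pow A)"]) (auto simp: tlg_def)

lemma finite_reg: "finite (reg a b)"
  by (rule finite_subset[of _ "{0..1} \<times> {0..<max a b}"]) auto

lemma tl_ext:
  assumes K1: "\<forall>t\<in>K. is_tile t" and K2: "\<forall>t\<in>K. \<forall>u\<in>K. t\<noteq>u \<longrightarrow> t\<inter>u={}"
    and K3: "\<Union>K \<inter> B = {}" and K4: "A = B \<union> \<Union>K"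
  shows "(tlg A P \<and> K \<subseteq> P) \<longleftrightarrow> (K \<subseteq> P \<and> tlg B (P - K))"
proof
  assume h: "tlg A P \<and> K \<subseteq> P"
  have "\<Union>(P - K) = B"
  proof
    show "\<Union>(P - K) \<subseteq> B"
    proof
      fix x assume "x \<in> \<Union>(P - K)"
      then obtain u where u: "u \<in> P" "u \<notin> K" "x \<in> u" by auto
      then have "x \<in> A" using h by (auto simp: tlg_def)
      moreover have "x \<notin> \<Union>K"
      proof
        assume "x \<in> \<Union>K" then obtain k where k: "k \<in> K" "x \<in> k" by auto
        have "k \<in> P" using h k by auto
        moreover have "k \<noteq> u" using u k by auto
        ultimately have "k \<inter> u = {}" using h u(1) unfolding tlg_def by blast
        then show False using k u by auto
      qed
      ultimately show "x \<in> B" using K4 by auto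
    qed
  next
    show "B \<subseteq> \<Union>(P - K)"
    proof
      fix x assume x: "x \<in> B"
      then have "x \<in> \<Union>P" using h K4 by (auto simp: tlg_def)
      then obtain u where "u \<in> P" "x \<in> u" by auto
      moreover have "u \<notin> K" using K3 x \<open>x \<in> u\<close> by auto
      ultimately show "x \<in> \<Union>(P - K)" by auto
    qed
  qed
  then show "K \<subseteq> P \<and> tlg B (P - K)" using h by (auto simp: tlg_def)
next
  assume h: "K \<subseteq> P \<and> tlg B (P - K)"
  have P: "P = (P - K) \<union> K" using h by auto
  have "\<forall>t\<in>P. \<forall>u\<in>P. t \<noteq> u \<longrightarrow> t \<inter> u = {}"
  proof (intro ballI impI)
    fix t u assume t: "t \<in> P" and u: "u \<in> P" and tu: "t \<noteq> u"
    show "t \<inter> u = {}"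
    proof (cases "t \<in> K")
      case True
      show ?thesis
      proof (cases "u \<in> K")
        case True then show ?thesis using \<open>t\<in>K\<close> tu K2 by auto
      next
        case False
        then have "u \<subseteq> B" using h u by (auto simp: tlg_def)
        then show ?thesis using K3 \<open>t \<in> K\<close> by auto
      qed
    next
      case False
      then have tB: "t \<subseteq> B" using h t by (auto simp: tlg_def)
      show ?thesis
      proof (cases "u \<in> K")
        case True then show ?thesis using tB K3 by auto
      next
        case False then show ?thesis using \<open>t \<notin> K\<close> h t u tu by (auto simp: tlg_def)
      qed
    qed
  qed
  moreover have "\<Union>P = A" using h K4 by (subst P) (auto simp: tlg_def)
  moreover have "\<forall>t\<in>P. is_tile t" using h K1 by (auto simp: tlg_def)
  ultimately show "tlg A P \<and> K \<subseteq> P" using h by (simp add: tlg_def)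
qed

lemma card_ext:
  assumes K1: "\<forall>t\<in>K. is_tile t" and K2: "\<forall>t\<in>K. \<forall>u\<in>K. t\<noteq>u \<longrightarrow> t\<inter>u={}"
    and K3: "\<Union>K \<inter> B = {}" and K4: "A = B \<union> \<Union>K"
    and Q: "\<And>P'. tlg B P' \<Longrightarrow> Q (P' \<union> K) \<longleftrightarrow> Q' P'"
  shows "card {P. tlg A P \<and> K \<subseteq> P \<and> Q P} = card {P'. tlg B P' \<and> Q' P'}"
proof -
  have disj: "P' \<inter> K = {}" if "tlg B P'" for P'
  proof (rule ccontr)
    assume "P' \<inter> K \<noteq> {}" then obtain t where t: "t \<in> P'" "t \<in> K" by auto
    then have "t \<subseteq> B" "t \<subseteq> \<Union>K" using that by (auto simp: tlg_def)
    moreover have "t \<noteq> {}" using K1 t tile_nonempty by auto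
    ultimately show False using K3 by auto
  qed
  have eq: "{P. tlg A P \<and> K \<subseteq> P \<and> Q P} = (\<lambda>P'. P' \<union> K) ` {P'. tlg B P' \<and> Q' P'}"
  proof (intro equalityI subsetI)
    fix P assume "P \<in> {P. tlg A P \<and> K \<subseteq> P \<and> Q P}"
    then have h: "tlg A P" "K \<subseteq> P" "Q P" by auto
    then have t: "tlg B (P - K)" using tl_ext[OF K1 K2 K3 K4] by blast
    have "P = (P - K) \<union> K" using h by auto
    then have "Q' (P - K)" using Q[OF t] h by auto
    then show "P \<in> (\<lambda>P'. P' \<union> K) ` {P'. tlg B P' \<and> Q' P'}"
      using t \<open>P = (P - K) \<union> K\<close> by blast
  next
    fix P assume "P \<in> (\<lambda>P'. P' \<union> K) ` {P'. tlg B P' \<and> Q' P'}"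
    then obtain P' where P: "P = P' \<union> K" "tlg B P'" "Q' P'" by auto
    have "P - K = P'" using disj[OF P(2)] P(1) by auto
    then have "tlg A P" using tl_ext[OF K1 K2 K3 K4, of P] P by auto
    then show "P \<in> {P. tlg A P \<and> K \<subseteq> P \<and> Q P}" using P Q by auto
  qed
  have "inj_on (\<lambda>P'. P' \<union> K) {P'. tlg B P' \<and> Q' P'}"
  proof (rule inj_onI)
    fix X Y assume "X \<in> {P'. tlg B P' \<and> Q' P'}" "Y \<in> {P'. tlg B P' \<and> Q' P'}" "X \<union> K = Y \<union> K"
    then show "X = Y" using disj by blast
  qed
  then show ?thesis by (simp add: eq card_image)
qed



lemma all_Suc: "(\<forall>j. 0<j \<and> j<Suc n \<longrightarrow> Q j) \<longleftrightarrow> (\<forall>j. 0<j \<and> j<n \<longrightarrow> Q j) \<and> (0<n \<longrightarrow> Q n)"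
  by (auto simp: less_Suc_eq)

lemma caseV:
  "card {P. tlg (reg (Suc c) (Suc c)) P \<and> {{(0,c),(1,c)}} \<subseteq> P \<and> cond (Suc c) (Suc c) P}
   = card {P. tlg (reg c c) P \<and> cond c c P}"
proof (rule card_ext)
  show "\<forall>t\<in>{{(0,c),(1,c)}}. is_tile t" using is_tile_V[of c] by simp
  show "\<forall>t\<in>{{(0::nat,c),(1,c)}}. \<forall>u\<in>{{(0,c),(1,c)}}. t\<noteq>u \<longrightarrow> t\<inter>u={}" by simp
  show "\<Union>{{(0,c),(1,c)}} \<inter> reg c c = {}" by auto
  show "reg (Suc c) (Suc c) = reg c c \<union> \<Union>{{(0,c),(1,c)}}" by (auto simp: reg_def)
  fix P' assume t: "tlg (reg c c) P'"
  have o1: "\<And>x y. x \<notin> reg c c \<Longrightarrow> \<not> same P' x y" using same_out1[OF t] by blast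
  have o2: "\<And>x y. y \<notin> reg c c \<Longrightarrow> \<not> same P' x y" using same_out2[OF t] by blast
  have e: "\<And>j. 0<j \<Longrightarrow> j<c \<Longrightarrow> C (P' \<union> {{(0,c),(1,c)}}) j = C P' j"
    by (auto simp: C_def same_Un)
  have b: "0<c \<Longrightarrow> C (P' \<union> {{(0,c),(1,c)}}) c" by (simp add: C_def same_Un)
  show "cond (Suc c) (Suc c) (P' \<union> {{(0,c),(1,c)}}) = cond c c P'"
    unfolding cond_def using e b by (auto simp: all_Suc)
qed


lemma caseMM:
  "card {P. tlg (reg (Suc c) (Suc c)) P \<and> {{(0,c)},{(1,c)}} \<subseteq> P \<and> cond (Suc c) (Suc c) P}
   = card {P. tlg (reg c c) P \<and> cond c c P \<and> (c=0 \<or> same P (0,c-1) (1,c-1))}"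
proof (rule card_ext)
  show "\<forall>t\<in>{{(0,c)},{(1,c)}}. is_tile t" using is_tile_M by simp
  show "\<forall>t\<in>{{(0,c)},{(1,c)}}. \<forall>u\<in>{{(0,c)},{(1,c)}}. t\<noteq>u \<longrightarrow> t\<inter>u=({}::(nat\<times>nat) set)" by auto
  show "\<Union>{{(0,c)},{(1,c)}} \<inter> (reg c c) = {}" by auto
  show "reg (Suc c) (Suc c) = (reg c c) \<union> \<Union>{{(0,c)},{(1,c)}}" by (auto simp: reg_def)
  fix P' assume t: "tlg (reg c c) P'"
  have o1: "\<And>x y. x \<notin> reg c c \<Longrightarrow> \<not> same P' x y" using same_out1[OF t] by blast
  have o2: "\<And>x y. y \<notin> reg c c \<Longrightarrow> \<not> same P' x y" using same_out2[OF t] by blast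
  have e: "\<And>j. 0<j \<Longrightarrow> j<c \<Longrightarrow> C (P' \<union> {{(0,c)},{(1,c)}}) j = C P' j"
    by (auto simp: C_def same_Un o1 o2)
  have b: "0<c \<Longrightarrow> C (P' \<union> {{(0,c)},{(1,c)}}) c = same P' (0,c-1) (1,c-1)"
    by (auto simp: C_def same_Un o1 o2)
  show "cond (Suc c) (Suc c) (P' \<union> {{(0,c)},{(1,c)}}) = (cond c c P' \<and> (c=0 \<or> same P' (0,c-1) (1,c-1)))"
    unfolding cond_def using e b by (auto simp: all_Suc)
qed

lemma caseMH:
  "card {P. tlg (reg (Suc (Suc d)) (Suc (Suc d))) P \<and> {{(0,Suc d)},{(1,d),(1,Suc d)}} \<subseteq> P \<and> cond (Suc (Suc d)) (Suc (Suc d)) P}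
   = card {P. tlg (reg (Suc d) d) P \<and> cond (Suc d) d P}"
proof (rule card_ext)
  show "\<forall>t\<in>{{(0,Suc d)},{(1,d),(1,Suc d)}}. is_tile t" using is_tile_M is_tile_H[of 1 d] by simp
  show "\<forall>t\<in>{{(0,Suc d)},{(1,d),(1,Suc d)}}. \<forall>u\<in>{{(0,Suc d)},{(1,d),(1,Suc d)}}. t\<noteq>u \<longrightarrow> t\<inter>u=({}::(nat\<times>nat) set)" by auto
  show "\<Union>{{(0,Suc d)},{(1,d),(1,Suc d)}} \<inter> (reg (Suc d) d) = {}" by auto
  show "reg (Suc (Suc d)) (Suc (Suc d)) = (reg (Suc d) d) \<union> \<Union>{{(0,Suc d)},{(1,d),(1,Suc d)}}" by (auto simp: reg_def)
  fix P' assume t: "tlg (reg (Suc d) d) P'"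
  have o1: "\<And>x y. x \<notin> reg (Suc d) d \<Longrightarrow> \<not> same P' x y" using same_out1[OF t] by blast
  have o2: "\<And>x y. y \<notin> reg (Suc d) d \<Longrightarrow> \<not> same P' x y" using same_out2[OF t] by blast
  have e: "\<And>j. 0<j \<Longrightarrow> j<Suc d \<Longrightarrow> C (P' \<union> {{(0,Suc d)},{(1,d),(1,Suc d)}}) j = C P' j"
    by (auto simp: C_def same_Un o1 o2)
  have b: "C (P' \<union> {{(0,Suc d)},{(1,d),(1,Suc d)}}) (Suc d)"
    by (auto simp: C_def same_Un o1 o2)
  show "cond (Suc (Suc d)) (Suc (Suc d)) (P' \<union> {{(0,Suc d)},{(1,d),(1,Suc d)}}) = cond (Suc d) d P'"
    unfolding cond_def using e b by (auto simp: all_Suc)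
qed

lemma caseHM:
  "card {P. tlg (reg (Suc (Suc d)) (Suc (Suc d))) P \<and> {{(0,d),(0,Suc d)},{(1,Suc d)}} \<subseteq> P \<and> cond (Suc (Suc d)) (Suc (Suc d)) P}
   = card {P. tlg (reg d (Suc d)) P \<and> cond d (Suc d) P}"
proof (rule card_ext)
  show "\<forall>t\<in>{{(0,d),(0,Suc d)},{(1,Suc d)}}. is_tile t" using is_tile_M is_tile_H[of 0 d] by simp
  show "\<forall>t\<in>{{(0,d),(0,Suc d)},{(1,Suc d)}}. \<forall>u\<in>{{(0,d),(0,Suc d)},{(1,Suc d)}}. t\<noteq>u \<longrightarrow> t\<inter>u=({}::(nat\<times>nat) set)" by auto
  show "\<Union>{{(0,d),(0,Suc d)},{(1,Suc d)}} \<inter> (reg d (Suc d)) = {}" by auto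
  show "reg (Suc (Suc d)) (Suc (Suc d)) = (reg d (Suc d)) \<union> \<Union>{{(0,d),(0,Suc d)},{(1,Suc d)}}" by (auto simp: reg_def)
  fix P' assume t: "tlg (reg d (Suc d)) P'"
  have o1: "\<And>x y. x \<notin> reg d (Suc d) \<Longrightarrow> \<not> same P' x y" using same_out1[OF t] by blast
  have o2: "\<And>x y. y \<notin> reg d (Suc d) \<Longrightarrow> \<not> same P' x y" using same_out2[OF t] by blast
  have e: "\<And>j. 0<j \<Longrightarrow> j<Suc d \<Longrightarrow> C (P' \<union> {{(0,d),(0,Suc d)},{(1,Suc d)}}) j = C P' j"
    by (auto simp: C_def same_Un o1 o2)
  have b: "C (P' \<union> {{(0,d),(0,Suc d)},{(1,Suc d)}}) (Suc d)"
    by (auto simp: C_def same_Un o1 o2)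
  show "cond (Suc (Suc d)) (Suc (Suc d)) (P' \<union> {{(0,d),(0,Suc d)},{(1,Suc d)}}) = cond d (Suc d) P'"
    unfolding cond_def using e b by (auto simp: all_Suc)
qed

lemma caseHH:
  "card {P. tlg (reg (Suc (Suc d)) (Suc (Suc d))) P \<and> {{(0,d),(0,Suc d)},{(1,d),(1,Suc d)}} \<subseteq> P \<and> cond (Suc (Suc d)) (Suc (Suc d)) P}
   = card {P. tlg (reg d d) P \<and> cond d d P \<and> (d=0 \<or> same P (0,d-1) (1,d-1))}"
proof (rule card_ext)
  show "\<forall>t\<in>{{(0,d),(0,Suc d)},{(1,d),(1,Suc d)}}. is_tile t" using is_tile_H[of 0 d] is_tile_H[of 1 d] by simp
  show "\<forall>t\<in>{{(0,d),(0,Suc d)},{(1,d),(1,Suc d)}}. \<forall>u\<in>{{(0,d),(0,Suc d)},{(1,d),(1,Suc d)}}. t\<noteq>u \<longrightarrow> t\<inter>u=({}::(nat\<times>nat) set)" by auto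
  show "\<Union>{{(0,d),(0,Suc d)},{(1,d),(1,Suc d)}} \<inter> (reg d d) = {}" by auto
  show "reg (Suc (Suc d)) (Suc (Suc d)) = (reg d d) \<union> \<Union>{{(0,d),(0,Suc d)},{(1,d),(1,Suc d)}}" by (auto simp: reg_def)
  fix P' assume t: "tlg (reg d d) P'"
  have o1: "\<And>x y. x \<notin> reg d d \<Longrightarrow> \<not> same P' x y" using same_out1[OF t] by blast
  have o2: "\<And>x y. y \<notin> reg d d \<Longrightarrow> \<not> same P' x y" using same_out2[OF t] by blast
  have e: "\<And>j. 0<j \<Longrightarrow> j<d \<Longrightarrow> C (P' \<union> {{(0,d),(0,Suc d)},{(1,d),(1,Suc d)}}) j = C P' j"
    by (auto simp: C_def same_Un o1 o2)
  have b: "C (P' \<union> {{(0,d),(0,Suc d)},{(1,d),(1,Suc d)}}) (Suc d)"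
    by (auto simp: C_def same_Un o1 o2)
  have b2: "0<d \<Longrightarrow> C (P' \<union> {{(0,d),(0,Suc d)},{(1,d),(1,Suc d)}}) d = same P' (0,d-1) (1,d-1)"
    by (auto simp: C_def same_Un o1 o2)
  show "cond (Suc (Suc d)) (Suc (Suc d)) (P' \<union> {{(0,d),(0,Suc d)},{(1,d),(1,Suc d)}}) = (cond d d P' \<and> (d=0 \<or> same P' (0,d-1) (1,d-1)))"
    unfolding cond_def using e b b2 by (auto simp: all_Suc)
qed

lemma stM:
  "card {P. tlg (reg (Suc c) c) P \<and> {{(0,c)}} \<subseteq> P \<and> cond (Suc c) c P}
   = card {P. tlg (reg c c) P \<and> cond c c P \<and> (c=0 \<or> same P (0,c-1) (1,c-1))}"
proof (rule card_ext)
  show "\<forall>t\<in>{{(0,c)}}. is_tile t" using is_tile_M by simp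
  show "\<forall>t\<in>{{(0,c)}}. \<forall>u\<in>{{(0,c)}}. t\<noteq>u \<longrightarrow> t\<inter>u=({}::(nat\<times>nat) set)" by auto
  show "\<Union>{{(0,c)}} \<inter> (reg c c) = {}" by auto
  show "reg (Suc c) c = (reg c c) \<union> \<Union>{{(0,c)}}" by (auto simp: reg_def)
  fix P' assume t: "tlg (reg c c) P'"
  have o1: "\<And>x y. x \<notin> reg c c \<Longrightarrow> \<not> same P' x y" using same_out1[OF t] by blast
  have o2: "\<And>x y. y \<notin> reg c c \<Longrightarrow> \<not> same P' x y" using same_out2[OF t] by blast
  have e: "\<And>j. 0<j \<Longrightarrow> j<c \<Longrightarrow> C (P' \<union> {{(0,c)}}) j = C P' j"
    by (auto simp: C_def same_Un o1 o2)
  have b: "0<c \<Longrightarrow> C (P' \<union> {{(0,c)}}) c = same P' (0,c-1) (1,c-1)"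
    by (auto simp: C_def same_Un o1 o2)
  show "cond (Suc c) c (P' \<union> {{(0,c)}}) = (cond c c P' \<and> (c=0 \<or> same P' (0,c-1) (1,c-1)))"
    unfolding cond_def using e b by (auto simp: all_Suc)
qed

lemma stM2:
  "card {P. tlg (reg c (Suc c)) P \<and> {{(1,c)}} \<subseteq> P \<and> cond c (Suc c) P}
   = card {P. tlg (reg c c) P \<and> cond c c P \<and> (c=0 \<or> same P (0,c-1) (1,c-1))}"
proof (rule card_ext)
  show "\<forall>t\<in>{{(1,c)}}. is_tile t" using is_tile_M by simp
  show "\<forall>t\<in>{{(1,c)}}. \<forall>u\<in>{{(1,c)}}. t\<noteq>u \<longrightarrow> t\<inter>u=({}::(nat\<times>nat) set)" by auto
  show "\<Union>{{(1,c)}} \<inter> (reg c c) = {}" by auto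
  show "reg c (Suc c) = (reg c c) \<union> \<Union>{{(1,c)}}" by (auto simp: reg_def)
  fix P' assume t: "tlg (reg c c) P'"
  have o1: "\<And>x y. x \<notin> reg c c \<Longrightarrow> \<not> same P' x y" using same_out1[OF t] by blast
  have o2: "\<And>x y. y \<notin> reg c c \<Longrightarrow> \<not> same P' x y" using same_out2[OF t] by blast
  have e: "\<And>j. 0<j \<Longrightarrow> j<c \<Longrightarrow> C (P' \<union> {{(1,c)}}) j = C P' j"
    by (auto simp: C_def same_Un o1 o2)
  have b: "0<c \<Longrightarrow> C (P' \<union> {{(1,c)}}) c = same P' (0,c-1) (1,c-1)"
    by (auto simp: C_def same_Un o1 o2)
  show "cond c (Suc c) (P' \<union> {{(1,c)}}) = (cond c c P' \<and> (c=0 \<or> same P' (0,c-1) (1,c-1)))"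
    unfolding cond_def using e b by (auto simp: all_Suc)
qed

lemma stH:
  "card {P. tlg (reg (Suc (Suc d)) (Suc d)) P \<and> {{(0,d),(0,Suc d)}} \<subseteq> P \<and> cond (Suc (Suc d)) (Suc d) P}
   = card {P. tlg (reg d (Suc d)) P \<and> cond d (Suc d) P}"
proof (rule card_ext)
  show "\<forall>t\<in>{{(0,d),(0,Suc d)}}. is_tile t" using is_tile_H[of 0 d] by simp
  show "\<forall>t\<in>{{(0,d),(0,Suc d)}}. \<forall>u\<in>{{(0,d),(0,Suc d)}}. t\<noteq>u \<longrightarrow> t\<inter>u=({}::(nat\<times>nat) set)" by auto
  show "\<Union>{{(0,d),(0,Suc d)}} \<inter> (reg d (Suc d)) = {}" by auto
  show "reg (Suc (Suc d)) (Suc d) = (reg d (Suc d)) \<union> \<Union>{{(0,d),(0,Suc d)}}" by (auto simp: reg_def)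
  fix P' assume t: "tlg (reg d (Suc d)) P'"
  have o1: "\<And>x y. x \<notin> reg d (Suc d) \<Longrightarrow> \<not> same P' x y" using same_out1[OF t] by blast
  have o2: "\<And>x y. y \<notin> reg d (Suc d) \<Longrightarrow> \<not> same P' x y" using same_out2[OF t] by blast
  have e: "\<And>j. 0<j \<Longrightarrow> j<Suc d \<Longrightarrow> C (P' \<union> {{(0,d),(0,Suc d)}}) j = C P' j"
    by (auto simp: C_def same_Un o1 o2)
  have b: "C (P' \<union> {{(0,d),(0,Suc d)}}) (Suc d)"
    by (auto simp: C_def same_Un o1 o2)
  show "cond (Suc (Suc d)) (Suc d) (P' \<union> {{(0,d),(0,Suc d)}}) = cond d (Suc d) P'"
    unfolding cond_def using e b by (auto simp: all_Suc)
qed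

lemma stH2:
  "card {P. tlg (reg (Suc d) (Suc (Suc d))) P \<and> {{(1,d),(1,Suc d)}} \<subseteq> P \<and> cond (Suc d) (Suc (Suc d)) P}
   = card {P. tlg (reg (Suc d) d) P \<and> cond (Suc d) d P}"
proof (rule card_ext)
  show "\<forall>t\<in>{{(1,d),(1,Suc d)}}. is_tile t" using is_tile_H[of 1 d] by simp
  show "\<forall>t\<in>{{(1,d),(1,Suc d)}}. \<forall>u\<in>{{(1,d),(1,Suc d)}}. t\<noteq>u \<longrightarrow> t\<inter>u=({}::(nat\<times>nat) set)" by auto
  show "\<Union>{{(1,d),(1,Suc d)}} \<inter> (reg (Suc d) d) = {}" by auto
  show "reg (Suc d) (Suc (Suc d)) = (reg (Suc d) d) \<union> \<Union>{{(1,d),(1,Suc d)}}" by (auto simp: reg_def)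
  fix P' assume t: "tlg (reg (Suc d) d) P'"
  have o1: "\<And>x y. x \<notin> reg (Suc d) d \<Longrightarrow> \<not> same P' x y" using same_out1[OF t] by blast
  have o2: "\<And>x y. y \<notin> reg (Suc d) d \<Longrightarrow> \<not> same P' x y" using same_out2[OF t] by blast
  have e: "\<And>j. 0<j \<Longrightarrow> j<Suc d \<Longrightarrow> C (P' \<union> {{(1,d),(1,Suc d)}}) j = C P' j"
    by (auto simp: C_def same_Un o1 o2)
  have b: "C (P' \<union> {{(1,d),(1,Suc d)}}) (Suc d)"
    by (auto simp: C_def same_Un o1 o2)
  show "cond (Suc d) (Suc (Suc d)) (P' \<union> {{(1,d),(1,Suc d)}}) = cond (Suc d) d P'"
    unfolding cond_def using e b by (auto simp: all_Suc)
qed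


lemma tile_sub: "tlg A P \<Longrightarrow> t \<in> P \<Longrightarrow> t \<subseteq> A"
  by (auto simp: tlg_def)

lemma tile_at: "tlg A P \<Longrightarrow> x \<in> A \<Longrightarrow> \<exists>t\<in>P. x \<in> t"
  by (auto simp: tlg_def)

lemma cover_sq:
  assumes h: "tlg (reg (Suc c) (Suc c)) P"
  shows "{(0,c),(1,c)} \<in> P \<or> ({(0,c)} \<in> P \<and> {(1,c)} \<in> P)
    \<or> (0<c \<and> {(0,c)} \<in> P \<and> {(1,c-1),(1,c)} \<in> P)
    \<or> (0<c \<and> {(0,c-1),(0,c)} \<in> P \<and> {(1,c)} \<in> P)
    \<or> (0<c \<and> {(0,c-1),(0,c)} \<in> P \<and> {(1,c-1),(1,c)} \<in> P)"
proof -
  obtain t0 where t0: "t0 \<in> P" "(0,c) \<in> t0" using tile_at[OF h, of "(0,c)"] by auto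
  obtain t1 where t1: "t1 \<in> P" "(1,c) \<in> t1" using tile_at[OF h, of "(1,c)"] by auto
  have s0: "t0 \<subseteq> reg (Suc c) (Suc c)" using tile_sub[OF h t0(1)] .
  have s1: "t1 \<subseteq> reg (Suc c) (Suc c)" using tile_sub[OF h t1(1)] .
  have it0: "is_tile t0" using h t0 by (auto simp: tlg_def)
  have it1: "is_tile t1" using h t1 by (auto simp: tlg_def)
  have c0: "t0 = {(0,c)} \<or> t0 = {(0,c),(0,Suc c)} \<or> (c>0 \<and> t0 = {(0,c-1),(0,c)}) \<or> t0 = {(0,c),(Suc 0,c)}"
    using cell_tile[OF it0 t0(2)] by simp
  have "(0, Suc c) \<notin> t0" using s0 by auto
  then have h0: "t0 = {(0,c)} \<or> (c>0 \<and> t0 = {(0,c-1),(0,c)}) \<or> t0 = {(0,c),(1,c)}"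
    using c0 by auto
  have c1: "t1 = {(1,c)} \<or> t1 = {(1,c),(1,Suc c)} \<or> (c>0 \<and> t1 = {(1,c-1),(1,c)}) \<or> t1 = {(1,c),(Suc (Suc 0),c)} \<or> t1 = {(0,c),(1,c)}"
    using cell_tile[OF it1 t1(2)] by simp
  have "(1, Suc c) \<notin> t1" "(Suc (Suc 0),c) \<notin> t1" using s1 by auto
  then have h1: "t1 = {(1,c)} \<or> (c>0 \<and> t1 = {(1,c-1),(1,c)}) \<or> t1 = {(0,c),(1,c)}"
    using c1 by auto
  show ?thesis using h0 h1 t0(1) t1(1) by blast
qed

lemma cover_st:
  assumes h: "tlg (reg (Suc c) c) P"
  shows "{(0,c)} \<in> P \<or> (0<c \<and> {(0,c-1),(0,c)} \<in> P)"
proof -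
  obtain t0 where t0: "t0 \<in> P" "(0,c) \<in> t0" using tile_at[OF h, of "(0,c)"] by auto
  have s0: "t0 \<subseteq> reg (Suc c) c" using tile_sub[OF h t0(1)] .
  have it0: "is_tile t0" using h t0 by (auto simp: tlg_def)
  have c0: "t0 = {(0,c)} \<or> t0 = {(0,c),(0,Suc c)} \<or> (c>0 \<and> t0 = {(0,c-1),(0,c)}) \<or> t0 = {(0,c),(Suc 0,c)}"
    using cell_tile[OF it0 t0(2)] by simp
  have "(0, Suc c) \<notin> t0" "(Suc 0, c) \<notin> t0" using s0 by auto
  then have h0: "t0 = {(0,c)} \<or> (c>0 \<and> t0 = {(0,c-1),(0,c)})"
    using c0 by auto
  show ?thesis using h0 t0(1) by blast
qed

lemma cover_st2:
  assumes h: "tlg (reg c (Suc c)) P"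
  shows "{(1,c)} \<in> P \<or> (0<c \<and> {(1,c-1),(1,c)} \<in> P)"
proof -
  obtain t1 where t1: "t1 \<in> P" "(1,c) \<in> t1" using tile_at[OF h, of "(1,c)"] by auto
  have s1: "t1 \<subseteq> reg c (Suc c)" using tile_sub[OF h t1(1)] .
  have it1: "is_tile t1" using h t1 by (auto simp: tlg_def)
  have c1: "t1 = {(1,c)} \<or> t1 = {(1,c),(1,Suc c)} \<or> (c>0 \<and> t1 = {(1,c-1),(1,c)}) \<or> t1 = {(1,c),(Suc (Suc 0),c)} \<or> t1 = {(0,c),(1,c)}"
    using cell_tile[OF it1 t1(2)] by simp
  have "(1, Suc c) \<notin> t1" "(Suc (Suc 0),c) \<notin> t1" "(0,c) \<notin> t1" using s1 by auto
  then have h1: "t1 = {(1,c)} \<or> (c>0 \<and> t1 = {(1,c-1),(1,c)})"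
    using c1 by auto
  show ?thesis using h1 t1(1) by blast
qed

lemma disjS: "k1 \<in> K1 \<Longrightarrow> k2 \<in> K2 \<Longrightarrow> x \<in> k1 \<Longrightarrow> x \<in> k2 \<Longrightarrow> y \<in> k1 \<Longrightarrow> y \<notin> k2 \<Longrightarrow>
  {P. tlg A P \<and> K1 \<subseteq> P \<and> Q P} \<inter> {P. tlg A P \<and> K2 \<subseteq> P \<and> Q P} = {}"
  using uniq by blast
lemma disjS2: "k1 \<in> K1 \<Longrightarrow> k2 \<in> K2 \<Longrightarrow> x \<in> k1 \<Longrightarrow> x \<in> k2 \<Longrightarrow> y \<in> k2 \<Longrightarrow> y \<notin> k1 \<Longrightarrow>
  {P. tlg A P \<and> K1 \<subseteq> P \<and> Q P} \<inter> {P. tlg A P \<and> K2 \<subseteq> P \<and> Q P} = {}"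
  using uniq by blast

lemma finS: "finite {P. tlg (reg a b) P \<and> X P}"
  by (rule finite_subset[OF _ tl_finite[OF finite_reg[of a b]]]) auto

definition N :: "nat \<Rightarrow> nat \<Rightarrow> nat" where "N a b = card {P. gt a b P}"
definition W :: "nat \<Rightarrow> nat" where "W c = card {P. gt c c P \<and> (c=0 \<or> same P (0,c-1) (1,c-1))}"

lemma N_def': "N a b = card {P. tlg (reg a b) P \<and> cond a b P}"
  by (simp add: N_def gt_def)
lemma W_def': "W c = card {P. tlg (reg c c) P \<and> cond c c P \<and> (c=0 \<or> same P (0,c-1) (1,c-1))}"
  by (simp add: W_def gt_def)

lemma N00: "N 0 0 = 1"
proof -
  have "{P. gt 0 0 P} = {{}}"
  proof (intro equalityI subsetI)
    fix P assume "P \<in> {P. gt 0 0 P}"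
    then have "\<Union>P = {}" "\<forall>t\<in>P. is_tile t" by (auto simp: gt_def tlg_def reg_def)
    then show "P \<in> {{}}" using tile_nonempty by auto
  next
    fix P assume "P \<in> {{}::(nat\<times>nat) set set}"
    then show "P \<in> {P. gt 0 0 P}" by (auto simp: gt_def tlg_def reg_def cond_def)
  qed
  then show ?thesis by (simp add: N_def)
qed

lemma W0: "W 0 = 1" using N00 by (simp add: W_def N_def)

lemma sameV: "tlg A P \<Longrightarrow> same P (0,d) (1,d) \<longleftrightarrow> {(0,d),(1,d)} \<in> P"
proof
  assume h: "tlg A P" "same P (0,d) (1,d)"
  then obtain t where t: "t \<in> P" "(0,d) \<in> t" "(1,d) \<in> t" by (auto simp: same_def)
  have it: "is_tile t" using h t by (auto simp: tlg_def)
  have "t = {(0,d)} \<or> t = {(0,d),(0,Suc d)} \<or> (d>0 \<and> t = {(0,d-1),(0,d)}) \<or> t = {(0,d),(Suc 0,d)}"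
    using cell_tile[OF it t(2)] by simp
  then have "t = {(0,d),(1,d)}" using t(3) by auto
  then show "{(0,d),(1,d)} \<in> P" using t by simp
next
  assume "{(0,d),(1,d)} \<in> P" then show "same P (0,d) (1,d)" by (auto simp: same_def)
qed

lemma WSuc: "W (Suc d) = N d d"
proof -
  have "W (Suc d) = card {P. tlg (reg (Suc d) (Suc d)) P \<and> {{(0,d),(1,d)}} \<subseteq> P \<and> cond (Suc d) (Suc d) P}"
    unfolding W_def' using sameV[of "reg (Suc d) (Suc d)" _ d] by (intro arg_cong[where f=card]) auto
  also have "\<dots> = N d d" using caseV[of d] by (simp add: N_def')
  finally show ?thesis .
qed


lemma card5: "finite A1 \<Longrightarrow> finite A2 \<Longrightarrow> finite A3 \<Longrightarrow> finite A4 \<Longrightarrow> finite A5 \<Longrightarrow>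
  A1 \<inter> A2 = {} \<Longrightarrow> A1 \<inter> A3 = {} \<Longrightarrow> A1 \<inter> A4 = {} \<Longrightarrow> A1 \<inter> A5 = {} \<Longrightarrow>
  A2 \<inter> A3 = {} \<Longrightarrow> A2 \<inter> A4 = {} \<Longrightarrow> A2 \<inter> A5 = {} \<Longrightarrow>
  A3 \<inter> A4 = {} \<Longrightarrow> A3 \<inter> A5 = {} \<Longrightarrow> A4 \<inter> A5 = {} \<Longrightarrow>
  card (A1 \<union> (A2 \<union> (A3 \<union> (A4 \<union> A5)))) = card A1 + card A2 + card A3 + card A4 + card A5"
  by (simp add: card_Un_disjoint Int_Un_distrib)

lemma sq_split: "N (Suc (Suc d)) (Suc (Suc d)) = N (Suc d) (Suc d) + W (Suc d) + N (Suc d) d + N d (Suc d) + W d"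
proof -
  have d12: "{P. tlg (reg (Suc (Suc d)) (Suc (Suc d))) P \<and> {{(0,Suc d),(1,Suc d)}} \<subseteq> P \<and> cond (Suc (Suc d)) (Suc (Suc d)) P} \<inter> {P. tlg (reg (Suc (Suc d)) (Suc (Suc d))) P \<and> {{(0,Suc d)},{(1,Suc d)}} \<subseteq> P \<and> cond (Suc (Suc d)) (Suc (Suc d)) P} = {}"
    by (rule disjS[of "{(0,Suc d),(1,Suc d)}" _ "{(0,Suc d)}" _ "(0,Suc d)" "(1,Suc d)"]) simp_all
  have d13: "{P. tlg (reg (Suc (Suc d)) (Suc (Suc d))) P \<and> {{(0,Suc d),(1,Suc d)}} \<subseteq> P \<and> cond (Suc (Suc d)) (Suc (Suc d)) P} \<inter> {P. tlg (reg (Suc (Suc d)) (Suc (Suc d))) P \<and> {{(0,Suc d)},{(1,d),(1,Suc d)}} \<subseteq> P \<and> cond (Suc (Suc d)) (Suc (Suc d)) P} = {}"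
    by (rule disjS[of "{(0,Suc d),(1,Suc d)}" _ "{(0,Suc d)}" _ "(0,Suc d)" "(1,Suc d)"]) simp_all
  have d14: "{P. tlg (reg (Suc (Suc d)) (Suc (Suc d))) P \<and> {{(0,Suc d),(1,Suc d)}} \<subseteq> P \<and> cond (Suc (Suc d)) (Suc (Suc d)) P} \<inter> {P. tlg (reg (Suc (Suc d)) (Suc (Suc d))) P \<and> {{(0,d),(0,Suc d)},{(1,Suc d)}} \<subseteq> P \<and> cond (Suc (Suc d)) (Suc (Suc d)) P} = {}"
    by (rule disjS[of "{(0,Suc d),(1,Suc d)}" _ "{(0,d),(0,Suc d)}" _ "(0,Suc d)" "(1,Suc d)"]) simp_all
  have d15: "{P. tlg (reg (Suc (Suc d)) (Suc (Suc d))) P \<and> {{(0,Suc d),(1,Suc d)}} \<subseteq> P \<and> cond (Suc (Suc d)) (Suc (Suc d)) P} \<inter> {P. tlg (reg (Suc (Suc d)) (Suc (Suc d))) P \<and> {{(0,d),(0,Suc d)},{(1,d),(1,Suc d)}} \<subseteq> P \<and> cond (Suc (Suc d)) (Suc (Suc d)) P} = {}"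
    by (rule disjS[of "{(0,Suc d),(1,Suc d)}" _ "{(0,d),(0,Suc d)}" _ "(0,Suc d)" "(1,Suc d)"]) simp_all
  have d23: "{P. tlg (reg (Suc (Suc d)) (Suc (Suc d))) P \<and> {{(0,Suc d)},{(1,Suc d)}} \<subseteq> P \<and> cond (Suc (Suc d)) (Suc (Suc d)) P} \<inter> {P. tlg (reg (Suc (Suc d)) (Suc (Suc d))) P \<and> {{(0,Suc d)},{(1,d),(1,Suc d)}} \<subseteq> P \<and> cond (Suc (Suc d)) (Suc (Suc d)) P} = {}"
    by (rule disjS2[of "{(1,Suc d)}" _ "{(1,d),(1,Suc d)}" _ "(1,Suc d)" "(1,d)"]) simp_all
  have d24: "{P. tlg (reg (Suc (Suc d)) (Suc (Suc d))) P \<and> {{(0,Suc d)},{(1,Suc d)}} \<subseteq> P \<and> cond (Suc (Suc d)) (Suc (Suc d)) P} \<inter> {P. tlg (reg (Suc (Suc d)) (Suc (Suc d))) P \<and> {{(0,d),(0,Suc d)},{(1,Suc d)}} \<subseteq> P \<and> cond (Suc (Suc d)) (Suc (Suc d)) P} = {}"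
    by (rule disjS2[of "{(0,Suc d)}" _ "{(0,d),(0,Suc d)}" _ "(0,Suc d)" "(0,d)"]) simp_all
  have d25: "{P. tlg (reg (Suc (Suc d)) (Suc (Suc d))) P \<and> {{(0,Suc d)},{(1,Suc d)}} \<subseteq> P \<and> cond (Suc (Suc d)) (Suc (Suc d)) P} \<inter> {P. tlg (reg (Suc (Suc d)) (Suc (Suc d))) P \<and> {{(0,d),(0,Suc d)},{(1,d),(1,Suc d)}} \<subseteq> P \<and> cond (Suc (Suc d)) (Suc (Suc d)) P} = {}"
    by (rule disjS2[of "{(0,Suc d)}" _ "{(0,d),(0,Suc d)}" _ "(0,Suc d)" "(0,d)"]) simp_all
  have d34: "{P. tlg (reg (Suc (Suc d)) (Suc (Suc d))) P \<and> {{(0,Suc d)},{(1,d),(1,Suc d)}} \<subseteq> P \<and> cond (Suc (Suc d)) (Suc (Suc d)) P} \<inter> {P. tlg (reg (Suc (Suc d)) (Suc (Suc d))) P \<and> {{(0,d),(0,Suc d)},{(1,Suc d)}} \<subseteq> P \<and> cond (Suc (Suc d)) (Suc (Suc d)) P} = {}"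
    by (rule disjS2[of "{(0,Suc d)}" _ "{(0,d),(0,Suc d)}" _ "(0,Suc d)" "(0,d)"]) simp_all
  have d35: "{P. tlg (reg (Suc (Suc d)) (Suc (Suc d))) P \<and> {{(0,Suc d)},{(1,d),(1,Suc d)}} \<subseteq> P \<and> cond (Suc (Suc d)) (Suc (Suc d)) P} \<inter> {P. tlg (reg (Suc (Suc d)) (Suc (Suc d))) P \<and> {{(0,d),(0,Suc d)},{(1,d),(1,Suc d)}} \<subseteq> P \<and> cond (Suc (Suc d)) (Suc (Suc d)) P} = {}"
    by (rule disjS2[of "{(0,Suc d)}" _ "{(0,d),(0,Suc d)}" _ "(0,Suc d)" "(0,d)"]) simp_all
  have d45: "{P. tlg (reg (Suc (Suc d)) (Suc (Suc d))) P \<and> {{(0,d),(0,Suc d)},{(1,Suc d)}} \<subseteq> P \<and> cond (Suc (Suc d)) (Suc (Suc d)) P} \<inter> {P. tlg (reg (Suc (Suc d)) (Suc (Suc d))) P \<and> {{(0,d),(0,Suc d)},{(1,d),(1,Suc d)}} \<subseteq> P \<and> cond (Suc (Suc d)) (Suc (Suc d)) P} = {}"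
    by (rule disjS2[of "{(1,Suc d)}" _ "{(1,d),(1,Suc d)}" _ "(1,Suc d)" "(1,d)"]) simp_all
  have eq: "{P. tlg (reg (Suc (Suc d)) (Suc (Suc d))) P \<and> cond (Suc (Suc d)) (Suc (Suc d)) P} = {P. tlg (reg (Suc (Suc d)) (Suc (Suc d))) P \<and> {{(0,Suc d),(1,Suc d)}} \<subseteq> P \<and> cond (Suc (Suc d)) (Suc (Suc d)) P} \<union> ({P. tlg (reg (Suc (Suc d)) (Suc (Suc d))) P \<and> {{(0,Suc d)},{(1,Suc d)}} \<subseteq> P \<and> cond (Suc (Suc d)) (Suc (Suc d)) P} \<union> ({P. tlg (reg (Suc (Suc d)) (Suc (Suc d))) P \<and> {{(0,Suc d)},{(1,d),(1,Suc d)}} \<subseteq> P \<and> cond (Suc (Suc d)) (Suc (Suc d)) P} \<union> ({P. tlg (reg (Suc (Suc d)) (Suc (Suc d))) P \<and> {{(0,d),(0,Suc d)},{(1,Suc d)}} \<subseteq> P \<and> cond (Suc (Suc d)) (Suc (Suc d)) P} \<union> {P. tlg (reg (Suc (Suc d)) (Suc (Suc d))) P \<and> {{(0,d),(0,Suc d)},{(1,d),(1,Suc d)}} \<subseteq> P \<and> cond (Suc (Suc d)) (Suc (Suc d)) P})))"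
  proof (intro equalityI subsetI)
    fix P assume "P \<in> {P. tlg (reg (Suc (Suc d)) (Suc (Suc d))) P \<and> cond (Suc (Suc d)) (Suc (Suc d)) P}"
    then have h: "tlg (reg (Suc (Suc d)) (Suc (Suc d))) P" "cond (Suc (Suc d)) (Suc (Suc d)) P" by auto
    have cv: "{(0,Suc d),(1,Suc d)} \<in> P \<or> ({(0,Suc d)} \<in> P \<and> {(1,Suc d)} \<in> P)
    \<or> ({(0,Suc d)} \<in> P \<and> {(1,d),(1,Suc d)} \<in> P)
    \<or> ({(0,d),(0,Suc d)} \<in> P \<and> {(1,Suc d)} \<in> P)
    \<or> ({(0,d),(0,Suc d)} \<in> P \<and> {(1,d),(1,Suc d)} \<in> P)"
      using cover_sq[OF h(1)] by simp
    show "P \<in> {P. tlg (reg (Suc (Suc d)) (Suc (Suc d))) P \<and> {{(0,Suc d),(1,Suc d)}} \<subseteq> P \<and> cond (Suc (Suc d)) (Suc (Suc d)) P} \<union> ({P. tlg (reg (Suc (Suc d)) (Suc (Suc d))) P \<and> {{(0,Suc d)},{(1,Suc d)}} \<subseteq> P \<and> cond (Suc (Suc d)) (Suc (Suc d)) P} \<union> ({P. tlg (reg (Suc (Suc d)) (Suc (Suc d))) P \<and> {{(0,Suc d)},{(1,d),(1,Suc d)}} \<subseteq> P \<and> cond (Suc (Suc d)) (Suc (Suc d)) P} \<union> ({P. tlg (reg (Suc (Suc d)) (Suc (Suc d))) P \<and> {{(0,d),(0,Suc d)},{(1,Suc d)}} \<subseteq> P \<and> cond (Suc (Suc d)) (Suc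 (Suc d)) P} \<union> {P. tlg (reg (Suc (Suc d)) (Suc (Suc d))) P \<and> {{(0,d),(0,Suc d)},{(1,d),(1,Suc d)}} \<subseteq> P \<and> cond (Suc (Suc d)) (Suc (Suc d)) P})))"
      unfolding Un_iff mem_Collect_eq insert_subset using h cv by blast
  next
    fix P assume "P \<in> {P. tlg (reg (Suc (Suc d)) (Suc (Suc d))) P \<and> {{(0,Suc d),(1,Suc d)}} \<subseteq> P \<and> cond (Suc (Suc d)) (Suc (Suc d)) P} \<union> ({P. tlg (reg (Suc (Suc d)) (Suc (Suc d))) P \<and> {{(0,Suc d)},{(1,Suc d)}} \<subseteq> P \<and> cond (Suc (Suc d)) (Suc (Suc d)) P} \<union> ({P. tlg (reg (Suc (Suc d)) (Suc (Suc d))) P \<and> {{(0,Suc d)},{(1,d),(1,Suc d)}} \<subseteq> P \<and> cond (Suc (Suc d)) (Suc (Suc d)) P} \<union> ({P. tlg (reg (Suc (Suc d)) (Suc (Suc d))) P \<and> {{(0,d),(0,Suc d)},{(1,Suc d)}} \<subseteq> P \<and> cond (Suc (Suc d)) (Suc (Suc d)) P} \<union> {P. tlg (reg (Suc (Suc d)) (Suc (Suc d))) P \<and> {{(0,d),(0,Suc d)},{(1,d),(1,Suc d)}} \<subseteq> P \<and> cond (Suc (Suc d)) (Suc (Suc d)) P})))"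
    then show "P \<in> {P. tlg (reg (Suc (Suc d)) (Suc (Suc d))) P \<and> cond (Suc (Suc d)) (Suc (Suc d)) P}"
      by blast
  qed
  have "N (Suc (Suc d)) (Suc (Suc d)) = card ({P. tlg (reg (Suc (Suc d)) (Suc (Suc d))) P \<and> {{(0,Suc d),(1,Suc d)}} \<subseteq> P \<and> cond (Suc (Suc d)) (Suc (Suc d)) P} \<union> ({P. tlg (reg (Suc (Suc d)) (Suc (Suc d))) P \<and> {{(0,Suc d)},{(1,Suc d)}} \<subseteq> P \<and> cond (Suc (Suc d)) (Suc (Suc d)) P} \<union> ({P. tlg (reg (Suc (Suc d)) (Suc (Suc d))) P \<and> {{(0,Suc d)},{(1,d),(1,Suc d)}} \<subseteq> P \<and> cond (Suc (Suc d)) (Suc (Suc d)) P} \<union> ({P. tlg (reg (Suc (Suc d)) (Suc (Suc d))) P \<and> {{(0,d),(0,Suc d)},{(1,Suc d)}} \<subseteq> P \<and> cond (Suc (Suc d)) (Suc (Suc d)) P} \<union> {P. tlg (reg (Suc (Suc d)) (Suc (Suc d))) P \<and> {{(0,d),(0,Suc d)},{(1,d),(1,Suc d)}} \<subseteq> P \<and> cond (Suc (Suc d)) (Suc (Suc d)) P}))))"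
    unfolding N_def' eq ..
  also have "\<dots> = card {P. tlg (reg (Suc (Suc d)) (Suc (Suc d))) P \<and> {{(0,Suc d),(1,Suc d)}} \<subseteq> P \<and> cond (Suc (Suc d)) (Suc (Suc d)) P} + card {P. tlg (reg (Suc (Suc d)) (Suc (Suc d))) P \<and> {{(0,Suc d)},{(1,Suc d)}} \<subseteq> P \<and> cond (Suc (Suc d)) (Suc (Suc d)) P} + card {P. tlg (reg (Suc (Suc d)) (Suc (Suc d))) P \<and> {{(0,Suc d)},{(1,d),(1,Suc d)}} \<subseteq> P \<and> cond (Suc (Suc d)) (Suc (Suc d)) P} + card {P. tlg (reg (Suc (Suc d)) (Suc (Suc d))) P \<and> {{(0,d),(0,Suc d)},{(1,Suc d)}} \<subseteq> P \<and> cond (Suc (Suc d)) (Suc (Suc d)) P} + card {P. tlg (reg (Suc (Suc d)) (Suc (Suc d))) P \<and> {{(0,d),(0,Suc d)},{(1,d),(1,Suc d)}} \<subseteq> P \<and> cond (Suc (Suc d)) (Suc (Suc d)) P}"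
    by (rule card5[OF finS finS finS finS finS d12 d13 d14 d15 d23 d24 d25 d34 d35 d45])
  also have "\<dots> = N (Suc d) (Suc d) + W (Suc d) + N (Suc d) d + N d (Suc d) + W d"
    using caseV[of "Suc d"] caseMM[of "Suc d"] caseMH[of d] caseHM[of d] caseHH[of d]
    by (simp add: N_def' W_def')
  finally show ?thesis .
qed


lemma N11: "N 1 1 = N 0 0 + W 0"
proof -
  let ?A = "reg (Suc 0) (Suc 0)" and ?c = "cond (Suc 0) (Suc 0)"
  let ?S1 = "{P. tlg ?A P \<and> {{(0,0),(1,0)}} \<subseteq> P \<and> ?c P}"
  let ?S2 = "{P. tlg ?A P \<and> {{(0,0)},{(1,0)}} \<subseteq> P \<and> ?c P}"
  have d: "?S1 \<inter> ?S2 = {}"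
    by (rule disjS[of "{(0,0),(1,0)}" _ "{(0,0)}" _ "(0,0)" "(1,0)"]) simp_all
  have eq: "{P. tlg ?A P \<and> ?c P} = ?S1 \<union> ?S2"
  proof (intro equalityI subsetI)
    fix P assume "P \<in> {P. tlg ?A P \<and> ?c P}"
    then have h: "tlg ?A P" "?c P" by auto
    have cv: "{(0,0),(1,0)} \<in> P \<or> ({(0,0)} \<in> P \<and> {(1,0)} \<in> P)"
      using cover_sq[OF h(1)] by simp
    show "P \<in> ?S1 \<union> ?S2"
      unfolding Un_iff mem_Collect_eq insert_subset using h cv by blast
  next
    fix P assume "P \<in> ?S1 \<union> ?S2"
    then show "P \<in> {P. tlg ?A P \<and> ?c P}" by blast
  qed
  have "N 1 1 = card (?S1 \<union> ?S2)" unfolding N_def' One_nat_def eq ..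
  also have "\<dots> = card ?S1 + card ?S2" by (rule card_Un_disjoint[OF finS finS d])
  also have "\<dots> = N 0 0 + W 0"
    using caseV[of 0] caseMM[of 0] by (simp add: N_def' W_def')
  finally show ?thesis .
qed

lemma N10: "N 1 0 = W 0"
proof -
  have "{P. tlg (reg (Suc 0) 0) P \<and> cond (Suc 0) 0 P} = {P. tlg (reg (Suc 0) 0) P \<and> {{(0,0)}} \<subseteq> P \<and> cond (Suc 0) 0 P}"
    using cover_st[of 0] by auto
  then show ?thesis using stM[of 0] unfolding N_def' W_def' by simp
qed

lemma N01: "N 0 1 = W 0"
proof -
  have "{P. tlg (reg 0 (Suc 0)) P \<and> cond 0 (Suc 0) P} = {P. tlg (reg 0 (Suc 0)) P \<and> {{(1,0)}} \<subseteq> P \<and> cond 0 (Suc 0) P}"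
    using cover_st2[of 0] by auto
  then show ?thesis using stM2[of 0] unfolding N_def' W_def' by simp
qed

lemma Nst: "N (Suc (Suc d)) (Suc d) = W (Suc d) + N d (Suc d)"
proof -
  let ?A = "reg (Suc (Suc d)) (Suc d)" and ?c = "cond (Suc (Suc d)) (Suc d)"
  let ?S1 = "{P. tlg ?A P \<and> {{(0,Suc d)}} \<subseteq> P \<and> ?c P}"
  let ?S2 = "{P. tlg ?A P \<and> {{(0,d),(0,Suc d)}} \<subseteq> P \<and> ?c P}"
  have dd: "?S1 \<inter> ?S2 = {}"
    by (rule disjS2[of "{(0,Suc d)}" _ "{(0,d),(0,Suc d)}" _ "(0,Suc d)" "(0,d)"]) simp_all
  have eq: "{P. tlg ?A P \<and> ?c P} = ?S1 \<union> ?S2"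
  proof (intro equalityI subsetI)
    fix P assume "P \<in> {P. tlg ?A P \<and> ?c P}"
    then have h: "tlg ?A P" "?c P" by auto
    have cv: "{(0,Suc d)} \<in> P \<or> {(0,d),(0,Suc d)} \<in> P"
      using cover_st[OF h(1)] by simp
    show "P \<in> ?S1 \<union> ?S2"
      unfolding Un_iff mem_Collect_eq insert_subset using h cv by blast
  next
    fix P assume "P \<in> ?S1 \<union> ?S2"
    then show "P \<in> {P. tlg ?A P \<and> ?c P}" by blast
  qed
  have "N (Suc (Suc d)) (Suc d) = card (?S1 \<union> ?S2)" unfolding N_def' eq ..
  also have "\<dots> = card ?S1 + card ?S2" by (rule card_Un_disjoint[OF finS finS dd])
  also have "\<dots> = W (Suc d) + N d (Suc d)"
    using stM[of "Suc d"] stH[of d] by (simp add: N_def' W_def')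
  finally show ?thesis .
qed

lemma Nst2: "N (Suc d) (Suc (Suc d)) = W (Suc d) + N (Suc d) d"
proof -
  let ?A = "reg (Suc d) (Suc (Suc d))" and ?c = "cond (Suc d) (Suc (Suc d))"
  let ?S1 = "{P. tlg ?A P \<and> {{(1,Suc d)}} \<subseteq> P \<and> ?c P}"
  let ?S2 = "{P. tlg ?A P \<and> {{(1,d),(1,Suc d)}} \<subseteq> P \<and> ?c P}"
  have dd: "?S1 \<inter> ?S2 = {}"
    by (rule disjS2[of "{(1,Suc d)}" _ "{(1,d),(1,Suc d)}" _ "(1,Suc d)" "(1,d)"]) simp_all
  have eq: "{P. tlg ?A P \<and> ?c P} = ?S1 \<union> ?S2"
  proof (intro equalityI subsetI)
    fix P assume "P \<in> {P. tlg ?A P \<and> ?c P}"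
    then have h: "tlg ?A P" "?c P" by auto
    have cv: "{(1,Suc d)} \<in> P \<or> {(1,d),(1,Suc d)} \<in> P"
      using cover_st2[OF h(1)] by simp
    show "P \<in> ?S1 \<union> ?S2"
      unfolding Un_iff mem_Collect_eq insert_subset using h cv by blast
  next
    fix P assume "P \<in> ?S1 \<union> ?S2"
    then show "P \<in> {P. tlg ?A P \<and> ?c P}" by blast
  qed
  have "N (Suc d) (Suc (Suc d)) = card (?S1 \<union> ?S2)" unfolding N_def' eq ..
  also have "\<dots> = card ?S1 + card ?S2" by (rule card_Un_disjoint[OF finS finS dd])
  also have "\<dots> = W (Suc d) + N (Suc d) d"
    using stM2[of "Suc d"] stH2[of d] by (simp add: N_def' W_def')
  finally show ?thesis .
qed



lemma diag1: "is_tile t \<Longrightarrow> (0,j-1) \<in> t \<Longrightarrow> (1,j) \<in> t \<Longrightarrow> 0<j \<Longrightarrow> False"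
proof -
  assume a: "is_tile t" "(0,j-1) \<in> t" "(1,j) \<in> t" "0<j"
  have "t = {(1,j)} \<or> t = {(1,j),(1,Suc j)} \<or> (j>0 \<and> t = {(1,j-1),(1,j)}) \<or> t = {(1,j),(Suc (Suc 0),j)} \<or> t = {(0,j),(1,j)}"
    using cell_tile[OF a(1) a(3)] by simp
  then show False using a(2) a(4) by auto
qed

lemma diag2: "is_tile t \<Longrightarrow> (0,j) \<in> t \<Longrightarrow> (1,j-1) \<in> t \<Longrightarrow> 0<j \<Longrightarrow> False"
proof -
  assume a: "is_tile t" "(0,j) \<in> t" "(1,j-1) \<in> t" "0<j"
  have "t = {(0,j)} \<or> t = {(0,j),(0,Suc j)} \<or> (j>0 \<and> t = {(0,j-1),(0,j)}) \<or> t = {(0,j),(Suc 0,j)}"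
    using cell_tile[OF a(1) a(2)] by simp
  then show False using a(3) a(4) by auto
qed

lemma four:
  assumes h: "tlg (reg c c) P" and j: "0<j" "j<c"
  shows "(\<exists>t1\<in>P. \<exists>t2\<in>P. \<exists>t3\<in>P. \<exists>t4\<in>P. distinct [t1,t2,t3,t4] \<and>
              (0,j-1) \<in> t1 \<and> (0,j) \<in> t2 \<and> (1,j-1) \<in> t3 \<and> (1,j) \<in> t4) \<longleftrightarrow> \<not> C P j"
proof
  have U: "\<And>t u x. t\<in>P \<Longrightarrow> u\<in>P \<Longrightarrow> x\<in>t \<Longrightarrow> x\<in>u \<Longrightarrow> t=u" using uniq[OF h] by blast
  assume "\<exists>t1\<in>P. \<exists>t2\<in>P. \<exists>t3\<in>P. \<exists>t4\<in>P. distinct [t1,t2,t3,t4] \<and>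
              (0,j-1) \<in> t1 \<and> (0,j) \<in> t2 \<and> (1,j-1) \<in> t3 \<and> (1,j) \<in> t4"
  then obtain t1 t2 t3 t4 where t: "t1\<in>P" "t2\<in>P" "t3\<in>P" "t4\<in>P" "distinct [t1,t2,t3,t4]"
    "(0,j-1) \<in> t1" "(0,j) \<in> t2" "(1,j-1) \<in> t3" "(1,j) \<in> t4" by blast
  show "\<not> C P j"
    unfolding C_def same_def
  proof (intro notI, elim disjE bexE conjE)
    fix t assume "t\<in>P" "(0,j-1) \<in> t" "(0,j) \<in> t"
    then have "t1 = t" "t2 = t" using U t by blast+
    then show False using t(5) by simp
  next
    fix t assume "t\<in>P" "(1,j-1) \<in> t" "(1,j) \<in> t"
    then have "t3 = t" "t4 = t" using U t by blast+
    then show False using t(5) by simp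
  next
    fix t assume "t\<in>P" "(0,j-1) \<in> t" "(1,j-1) \<in> t"
    then have "t1 = t" "t3 = t" using U t by blast+
    then show False using t(5) by simp
  next
    fix t assume "t\<in>P" "(0,j) \<in> t" "(1,j) \<in> t"
    then have "t2 = t" "t4 = t" using U t by blast+
    then show False using t(5) by simp
  qed
next
  assume nc: "\<not> C P j"
  have m: "(0,j-1) \<in> reg c c" "(0,j) \<in> reg c c" "(1,j-1) \<in> reg c c" "(1,j) \<in> reg c c"
    using j by auto
  obtain t1 where t1: "t1\<in>P" "(0,j-1) \<in> t1" using tile_at[OF h m(1)] by blast
  obtain t2 where t2: "t2\<in>P" "(0,j) \<in> t2" using tile_at[OF h m(2)] by blast
  obtain t3 where t3: "t3\<in>P" "(1,j-1) \<in> t3" using tile_at[OF h m(3)] by blast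
  obtain t4 where t4: "t4\<in>P" "(1,j) \<in> t4" using tile_at[OF h m(4)] by blast
  have it: "\<And>t. t \<in> P \<Longrightarrow> is_tile t" using h by (auto simp: tlg_def)
  have "t1 \<noteq> t2" using nc t1 t2 unfolding C_def same_def by blast
  moreover have "t3 \<noteq> t4" using nc t3 t4 unfolding C_def same_def by blast
  moreover have "t1 \<noteq> t3" using nc t1 t3 unfolding C_def same_def by blast
  moreover have "t2 \<noteq> t4" using nc t2 t4 unfolding C_def same_def by blast
  moreover have "t1 \<noteq> t4" using diag1[OF it[OF t1(1)] t1(2) _ j(1)] t4 by blast
  moreover have "t2 \<noteq> t3" using diag2[OF it[OF t2(1)] t2(2) _ j(1)] t3 by blast
  ultimately have "distinct [t1,t2,t3,t4]" by auto
  then show "\<exists>t1\<in>P. \<exists>t2\<in>P. \<exists>t3\<in>P. \<exists>t4\<in>P. distinct [t1,t2,t3,t4] \<and>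
              (0,j-1) \<in> t1 \<and> (0,j) \<in> t2 \<and> (1,j-1) \<in> t3 \<and> (1,j) \<in> t4"
    using t1 t2 t3 t4 by blast
qed

lemma grid_reg: "grid 2 c = reg c c"
  unfolding grid_def reg_def by auto

lemma tatami_gt: "tatami 2 c P \<longleftrightarrow> gt c c P"
proof (cases "tlg (reg c c) P")
  case False
  then have "\<not> tiling 2 c P" unfolding tiling_def tlg_def grid_reg by simp
  then show ?thesis using False by (simp add: tatami_def gt_def)
next
  case True
  have tl: "tiling 2 c P" using True unfolding tiling_def tlg_def grid_reg by simp
  have "(\<forall>i j. 0 < i \<and> i < 2 \<and> 0 < j \<and> j < c \<longrightarrow>
        \<not> (\<exists>t1\<in>P. \<exists>t2\<in>P. \<exists>t3\<in>P. \<exists>t4\<in>P. distinct [t1,t2,t3,t4] \<and>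
              (i-1,j-1) \<in> t1 \<and> (i-1,j) \<in> t2 \<and> (i,j-1) \<in> t3 \<and> (i,j) \<in> t4))
      \<longleftrightarrow> (\<forall>j. 0 < j \<and> j < c \<longrightarrow>
        \<not> (\<exists>t1\<in>P. \<exists>t2\<in>P. \<exists>t3\<in>P. \<exists>t4\<in>P. distinct [t1,t2,t3,t4] \<and>
              (0,j-1) \<in> t1 \<and> (0,j) \<in> t2 \<and> (1,j-1) \<in> t3 \<and> (1,j) \<in> t4))"
  proof
    assume a: "\<forall>i j. 0 < i \<and> i < 2 \<and> 0 < j \<and> j < c \<longrightarrow>
        \<not> (\<exists>t1\<in>P. \<exists>t2\<in>P. \<exists>t3\<in>P. \<exists>t4\<in>P. distinct [t1,t2,t3,t4] \<and>
              (i-1,j-1) \<in> t1 \<and> (i-1,j) \<in> t2 \<and> (i,j-1) \<in> t3 \<and> (i,j) \<in> t4)"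
    show "\<forall>j. 0 < j \<and> j < c \<longrightarrow>
        \<not> (\<exists>t1\<in>P. \<exists>t2\<in>P. \<exists>t3\<in>P. \<exists>t4\<in>P. distinct [t1,t2,t3,t4] \<and>
              (0,j-1) \<in> t1 \<and> (0,j) \<in> t2 \<and> (1,j-1) \<in> t3 \<and> (1,j) \<in> t4)"
      using a[rule_format, of 1] by simp
  next
    assume a: "\<forall>j. 0 < j \<and> j < c \<longrightarrow>
        \<not> (\<exists>t1\<in>P. \<exists>t2\<in>P. \<exists>t3\<in>P. \<exists>t4\<in>P. distinct [t1,t2,t3,t4] \<and>
              (0,j-1) \<in> t1 \<and> (0,j) \<in> t2 \<and> (1,j-1) \<in> t3 \<and> (1,j) \<in> t4)"
    show "\<forall>i j. 0 < i \<and> i < 2 \<and> 0 < j \<and> j < c \<longrightarrow>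
        \<not> (\<exists>t1\<in>P. \<exists>t2\<in>P. \<exists>t3\<in>P. \<exists>t4\<in>P. distinct [t1,t2,t3,t4] \<and>
              (i-1,j-1) \<in> t1 \<and> (i-1,j) \<in> t2 \<and> (i,j-1) \<in> t3 \<and> (i,j) \<in> t4)"
    proof (intro allI impI)
      fix i j assume ij: "0 < i \<and> i < (2::nat) \<and> 0 < j \<and> j < c"
      then have "i = 1" by simp
      then show "\<not> (\<exists>t1\<in>P. \<exists>t2\<in>P. \<exists>t3\<in>P. \<exists>t4\<in>P. distinct [t1,t2,t3,t4] \<and>
              (i-1,j-1) \<in> t1 \<and> (i-1,j) \<in> t2 \<and> (i,j-1) \<in> t3 \<and> (i,j) \<in> t4)"
        using a ij unfolding \<open>i = 1\<close> by simp
    qed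
  qed
  also have "\<dots> \<longleftrightarrow> cond c c P"
    unfolding cond_def using four[OF True] by auto
  finally show ?thesis using tl True by (simp add: tatami_def gt_def)
qed

lemma T_N: "T 2 c = N c c"
  unfolding T_def N_def by (rule arg_cong[where f=card]) (auto simp: tatami_gt)



lemma SS: "N (Suc c) c = N c (Suc c)"
proof (induction c)
  case 0 then show ?case using N10 N01 by simp
next
  case (Suc d) then show ?case using Nst[of d] Nst2[of d] by simp
qed

lemma Rrec: "N (Suc (Suc (Suc (Suc n)))) (Suc (Suc (Suc (Suc n)))) + N n n
  = 2 * N (Suc (Suc (Suc n))) (Suc (Suc (Suc n))) + 2 * N (Suc n) (Suc n)"
proof -
  have a: "N (Suc (Suc (Suc (Suc n)))) (Suc (Suc (Suc (Suc n)))) = N (Suc (Suc (Suc n))) (Suc (Suc (Suc n))) + W (Suc (Suc (Suc n))) + N (Suc (Suc (Suc n))) (Suc (Suc n)) + N (Suc (Suc n)) (Suc (Suc (Suc n))) + W (Suc (Suc n))"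
    by (rule sq_split)
  have b: "N (Suc (Suc (Suc n))) (Suc (Suc (Suc n))) = N (Suc (Suc n)) (Suc (Suc n)) + W (Suc (Suc n)) + N (Suc (Suc n)) (Suc n) + N (Suc n) (Suc (Suc n)) + W (Suc n)"
    by (rule sq_split)
  have c: "N (Suc (Suc (Suc n))) (Suc (Suc n)) = W (Suc (Suc n)) + N (Suc n) (Suc (Suc n))" by (rule Nst)
  have d: "N (Suc (Suc n)) (Suc (Suc (Suc n))) = W (Suc (Suc n)) + N (Suc (Suc n)) (Suc n)" by (rule Nst2)
  have w: "W (Suc (Suc (Suc n))) = N (Suc (Suc n)) (Suc (Suc n))" "W (Suc (Suc n)) = N (Suc n) (Suc n)"
    "W (Suc n) = N n n" by (rule WSuc)+
  show ?thesis using a b c d w by linarith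
qed

lemma R0: "N 0 0 = 1" by (rule N00)
lemma R1: "N 1 1 = 2" using N11 N00 W0 by simp
lemma R2: "N 2 2 = 6"
proof -
  have "N (Suc (Suc 0)) (Suc (Suc 0)) = N (Suc 0) (Suc 0) + W (Suc 0) + N (Suc 0) 0 + N 0 (Suc 0) + W 0"
    by (rule sq_split)
  then show ?thesis using R1 WSuc[of 0] N00 N10 N01 W0 by (simp add: numeral_2_eq_2)
qed
lemma R3: "N 3 3 = 13"
proof -
  have "N (Suc (Suc (Suc 0))) (Suc (Suc (Suc 0))) = N (Suc (Suc 0)) (Suc (Suc 0)) + W (Suc (Suc 0)) + N (Suc (Suc 0)) (Suc 0) + N (Suc 0) (Suc (Suc 0)) + W (Suc 0)"
    by (rule sq_split)
  moreover have "N (Suc (Suc 0)) (Suc 0) = W (Suc 0) + N 0 (Suc 0)" by (rule Nst)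
  moreover have "N (Suc 0) (Suc (Suc 0)) = W (Suc 0) + N (Suc 0) 0" by (rule Nst2)
  ultimately show ?thesis using R1 R2 WSuc[of 0] WSuc[of 1] N00 N10 N01 W0
    by (simp add: numeral_3_eq_3 numeral_2_eq_2)
qed

lemma Rrec_real: "real (N (n+4) (n+4)) = 2 * real (N (n+3) (n+3)) + 2 * real (N (n+1) (n+1)) - real (N n n)"
proof -
  have "real (N (Suc (Suc (Suc (Suc n)))) (Suc (Suc (Suc (Suc n))))) + real (N n n)
    = 2 * real (N (Suc (Suc (Suc n))) (Suc (Suc (Suc n)))) + 2 * real (N (Suc n) (Suc n))"
    using arg_cong[OF Rrec, of real] by simp
  then show ?thesis by (simp add: eval_nat_numeral)
qed

lemma main_fps:
  "(Abs_fps (\<lambda>c. real (N c c))) * (1 - 2 * fps_X - 2 * fps_X ^ 3 + fps_X ^ 4)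
   = (1 + 2 * fps_X ^ 2 - fps_X ^ 3 :: real fps)"
proof -
  let ?f = "Abs_fps (\<lambda>c. real (N c c))"
  have e: "?f * (1 - 2 * fps_X - 2 * fps_X ^ 3 + fps_X ^ 4)
     = ?f - fps_const 2 * (fps_X^1 * ?f) - fps_const 2 * (fps_X^3 * ?f) + fps_X^4 * ?f"
    by (simp add: numeral_fps_const algebra_simps)
  have n: "(1 + 2 * fps_X ^ 2 - fps_X ^ 3 :: real fps) = 1 + fps_const 2 * fps_X ^ 2 - fps_X ^ 3"
    by (simp add: numeral_fps_const)
  show ?thesis
    unfolding e n
  proof (rule fps_ext)
    fix k
    show "fps_nth (?f - fps_const 2 * (fps_X^1 * ?f) - fps_const 2 * (fps_X^3 * ?f) + fps_X^4 * ?f) k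
       = fps_nth (1 + fps_const 2 * fps_X ^ 2 - fps_X ^ 3 :: real fps) k"
    proof -
      have "k = 0 \<or> k = 1 \<or> k = 2 \<or> k = 3 \<or> (\<exists>m. k = m + 4)" by presburger
      then show ?thesis
      proof (elim disjE exE)
        assume "k = 0" then show ?thesis using R0 by (simp add: fps_X_power_mult_nth)
      next
        assume "k = 1" then show ?thesis using R0 R1 by (simp add: fps_X_power_mult_nth)
      next
        assume "k = 2" then show ?thesis using R1 R2 by (simp add: fps_X_power_mult_nth)
      next
        assume "k = 3" then show ?thesis using R0 R2 R3 by (simp add: fps_X_power_mult_nth)
      next
        fix m assume "k = m + 4"
        then show ?thesis using Rrec_real[of m] by (simp add: fps_X_power_mult_nth fps_X_power_mult_right_nth algebra_simps)
      qed
    qed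
  qed
qed

theorem lemma4:
  shows "(Abs_fps (\<lambda>c. of_nat (T 2 c)) :: real fps)
       = (1 + 2 * fps_X ^ 2 - fps_X ^ 3) / (1 - 2 * fps_X - 2 * fps_X ^ 3 + fps_X ^ 4)"
proof -
  let ?D = "1 - 2 * fps_X - 2 * fps_X ^ 3 + fps_X ^ 4 :: real fps"
  have D0: "?D \<noteq> 0"
  proof
    assume "?D = 0"
    then have "fps_nth ?D 0 = 0" by simp
    then show False by (simp add: numeral_fps_const)
  qed
  have "(Abs_fps (\<lambda>c. of_nat (T 2 c)) :: real fps) = Abs_fps (\<lambda>c. real (N c c))"
    by (simp add: T_N)
  also have "\<dots> = (Abs_fps (\<lambda>c. real (N c c)) * ?D) / ?D"
    using D0 by (simp add: fps_divide_times_eq)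
  also have "\<dots> = (1 + 2 * fps_X ^ 2 - fps_X ^ 3) / ?D"
    by (simp only: main_fps)
  finally show ?thesis .
qed


end
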